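(* Let $k\ge 1$ and $1\le k^*\le k$ be integers, and run the Reduce-By-Median-Counter algorithm (defined in the context) with parameters $k,k^*$ on a weighted stream. Then for every integer $0\le j<k^*$ and every item $i\in[m]$, the estimate $\hat f_i$ returned by Estimate$(i)$ after processing the stream satisfies $$0\le f_i-\hat f_i\le \frac{N^{\mathrm{res}(j)}}{k^*-j}.$$
   Context: A weighted stream over the universe $[m]=\{1,\dots,m\}$ is a sequence of updates $(i_1,\Delta_1),\dots,(i_n,\Delta_n)$ with $i_t\in[m]$ and real weights $\Delta_t>0$. The frequency of $i$ is $f_i=\sum_{t: i_t=i}\Delta_t$, and $N=\sum_t\Delta_t$. $N^{\mathrm{res}(j)}$ denotes the sum of the frequencies of all items except the $j$ items of largest frequency (ties broken arbitrarily). The Reduce-By-Median-Counter algorithm with integer parameters $k\ge 1$ and $1\le k^*\le k$ maintains a set $T\subseteq[m]$ of at most $k$ items, each $j\in T$ carrying a nonnegative real counter $c(j)$; initially $T=\emptyset$. Update$(i,\Delta)$: if $i\in T$, set $c(i)\gets c(i)+\Delta$; else if $|T|<k$, add $i$ to $T$ with $c(i)=\Delta$; else call DecrementCounters(), and afterwards, if $\Delta\ge c_{k^*}$, add $i$ to $T$ with $c(i)=\Delta-c_{k^*}$. DecrementCounters(): let $c_{k^*}$ be the $k^*$-th largest value, counting multiplicity, of the multiset $\{c(j): j\in T\}$; for every $j\in T$ set $c(j)\gets c(j)-c_{k^*}$, and remove $j$ from $T$ if now $c(j)\le 0$. Estimate$(i)$ returns $c(i)$ if $i\in T$ and $0$ otherwise.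 *)

theory Defs
  imports Complex_Main "HOL-Library.Multiset"
begin

(* State of the algorithm: the set T of monitored items and the counters c
   (values of c outside T are irrelevant). Items are natural numbers. *)
type_synonym rbmc_state = "nat set \<times> (nat \<Rightarrow> real)"

definition kth_largest :: "nat set \<Rightarrow> (nat \<Rightarrow> real) \<Rightarrow> nat \<Rightarrow> real" where
  "kth_largest T c r = rev (sorted_list_of_multiset (image_mset c (mset_set T))) ! (r - 1)"

definition decrement_counters :: "nat \<Rightarrow> rbmc_state \<Rightarrow> rbmc_state" where
  "decrement_counters ks st =
     (let T = fst st; c = snd st; ck = kth_largest T c ks; c' = (\<lambda>j. c j - ck)
      in ({j \<in> T. c' j > 0}, c'))"

definition rbmc_update :: "nat \<Rightarrow> nat \<Rightarrow> rbmc_state \<Rightarrow> nat \<times> real \<Rightarrow> rbmc_state" where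
  "rbmc_update k ks st upd =
     (let T = fst st; c = snd st; i = fst upd; d = snd upd in
      if i \<in> T then (T, c(i := c i + d))
      else if card T < k then (insert i T, c(i := d))
      else (let ck = kth_largest T c ks; st' = decrement_counters ks st in
            if d \<ge> ck then (insert i (fst st'), (snd st')(i := d - ck)) else st'))"

definition rbmc_init :: rbmc_state where
  "rbmc_init = ({}, (\<lambda>_. 0))"

definition rbmc_run :: "nat \<Rightarrow> nat \<Rightarrow> (nat \<times> real) list \<Rightarrow> rbmc_state" where
  "rbmc_run k ks s = foldl (rbmc_update k ks) rbmc_init s"

definition rbmc_estimate :: "rbmc_state \<Rightarrow> nat \<Rightarrow> real" where
  "rbmc_estimate st i = (if i \<in> fst st then snd st i else 0)"

definition freq :: "(nat \<times> real) list \<Rightarrow> nat \<Rightarrow> real" where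
  "freq s i = sum_list (map snd (filter (\<lambda>u. fst u = i) s))"

definition Nres :: "nat \<Rightarrow> (nat \<times> real) list \<Rightarrow> nat \<Rightarrow> real" where
  "Nres m s j = sum_list (drop j (rev (sorted_list_of_multiset
                   (image_mset (freq s) (mset_set {1..m})))))"

end

theory Submission
  imports Defs
begin

lemma kth_prop:
  assumes fin: "finite T" and r1: "1 \<le> r" and rn: "r \<le> card T"
  shows "kth_largest T c r \<in> c ` T \<and> r \<le> card {x\<in>T. kth_largest T c r \<le> c x}"
proof -
  define M where "M = image_mset c (mset_set T)"
  define S where "S = sorted_list_of_multiset M"
  define n where "n = length S"
  have mS: "mset S = M" unfolding S_def by simp
  have nT: "n = card T" unfolding n_def
    by (metis M_def mS size_image_mset size_mset size_mset_set)
  have srt: "sorted S" unfolding S_def by simp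
  define v where "v = kth_largest T c r"
  have v: "v = S ! (n - r)"
    unfolding v_def kth_largest_def S_def[symmetric] M_def[symmetric] n_def
    using r1 rn nT n_def by (simp add: rev_nth)
  have nr: "n - r < n" using r1 rn nT by simp
  have "v \<in> set S" using v nr n_def by simp
  hence vmem: "v \<in> c ` T" using mS M_def fin by (metis set_image_mset set_mset_mset finite_set_mset_mset_set)
  have dr: "drop (n - r) S = v # drop (Suc (n - r)) S"
    using v nr n_def by (simp add: Cons_nth_drop_Suc)
  have "sorted (drop (n - r) S)" using srt by (simp add: sorted_wrt_drop)
  hence allge: "\<forall>y\<in>set (drop (n - r) S). v \<le> y" using dr by auto
  have "length (filter (\<lambda>y. v \<le> y) (drop (n - r) S)) = r"
    using allge n_def r1 rn nT by (simp add: filter_id_conv[THEN iffD2])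
  moreover have "length (filter (\<lambda>y. v \<le> y) (drop (n - r) S)) \<le> length (filter (\<lambda>y. v \<le> y) S)"
  proof -
    have "S = take (n - r) S @ drop (n - r) S" by simp
    hence "filter (\<lambda>y. v \<le> y) S = filter (\<lambda>y. v \<le> y) (take (n - r) S) @ filter (\<lambda>y. v \<le> y) (drop (n - r) S)"
      by (metis filter_append)
    thus ?thesis by (metis length_append le_add2)
  qed
  moreover have "length (filter (\<lambda>y. v \<le> y) S) = card {x\<in>T. v \<le> c x}"
  proof -
    have "length (filter (\<lambda>y. v \<le> y) S) = size (filter_mset (\<lambda>y. v \<le> y) M)"
      by (metis mS mset_filter size_mset)
    also have "\<dots> = card {x\<in>T. v \<le> c x}"
      unfolding M_def filter_mset_image_mset using fin by simp
    finally show ?thesis .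
  qed
  ultimately show ?thesis using vmem v_def by auto
qed


definition gap :: "(nat \<times> real) list \<Rightarrow> rbmc_state \<Rightarrow> nat \<Rightarrow> real" where
  "gap s st x = freq s x - rbmc_estimate st x"

definition rinv :: "nat \<Rightarrow> nat \<Rightarrow> nat \<Rightarrow> (nat \<times> real) list \<Rightarrow> rbmc_state \<Rightarrow> bool" where
  "rinv k ks m s st \<longleftrightarrow> finite (fst st) \<and> card (fst st) \<le> k \<and> fst st \<subseteq> {1..m}
     \<and> (\<forall>x\<in>fst st. 0 \<le> snd st x)
     \<and> (\<exists>D\<ge>0. (\<forall>x. 0 \<le> gap s st x \<and> gap s st x \<le> D) \<and> real ks * D \<le> (\<Sum>x\<in>{1..m}. gap s st x))"

lemma freq_snoc: "freq (s @ [(a,d)]) x = freq s x + (if x = a then d else 0)"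
  by (simp add: freq_def)

lemma step:
  assumes inv: "rinv k ks m s (T,c)" and ks1: "1 \<le> ks" and ksk: "ks \<le> k"
    and am: "a \<in> {1..m}" and dpos: "d > 0"
  shows "rinv k ks m (s @ [(a,d)]) (rbmc_update k ks (T,c) (a,d))"
proof -
  from inv have fin: "finite T" and cardT: "card T \<le> k" and TU: "T \<subseteq> {1..m}"
    and cnn: "\<forall>x\<in>T. 0 \<le> c x"
    unfolding rinv_def by auto
  from inv obtain D where D0: "D \<ge> 0" and gD: "\<forall>x. 0 \<le> gap s (T,c) x \<and> gap s (T,c) x \<le> D"
    and sD: "real ks * D \<le> (\<Sum>x\<in>{1..m}. gap s (T,c) x)"
    unfolding rinv_def by auto
  show ?thesis
  proof (cases "a \<in> T")
    case True
    have st: "rbmc_update k ks (T,c) (a,d) = (T, c(a := c a + d))"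
      using True by (simp add: rbmc_update_def)
    have g: "gap (s @ [(a,d)]) (T, c(a := c a + d)) x = gap s (T,c) x" for x
      using True by (simp add: gap_def freq_snoc rbmc_estimate_def)
    show ?thesis unfolding st rinv_def using fin cardT TU cnn dpos D0 gD sD True
      by (simp add: g) (smt (verit))
  next
    case aT: False
    show ?thesis
    proof (cases "card T < k")
      case True
      have st: "rbmc_update k ks (T,c) (a,d) = (insert a T, c(a := d))"
        using True aT by (simp add: rbmc_update_def)
      have g: "gap (s @ [(a,d)]) (insert a T, c(a := d)) x = gap s (T,c) x" for x
        using aT by (simp add: gap_def freq_snoc rbmc_estimate_def)
      have "card (insert a T) \<le> k" using True fin by (simp add: card_insert_if)
      thus ?thesis unfolding st rinv_def using fin TU cnn dpos D0 gD sD aT am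
        by (simp add: g) (smt (verit))
    next
      case False
      hence ck: "card T = k" using cardT by simp
      define ck where "ck = kth_largest T c ks"
      have kp: "ck \<in> c ` T \<and> ks \<le> card {x\<in>T. ck \<le> c x}"
        unfolding ck_def using kth_prop[OF fin ks1] ksk ck by simp
      have ck0: "0 \<le> ck" using kp cnn by auto
      define T2 where "T2 = {x\<in>T. 0 < c x - ck}"
      define c2 where "c2 = (\<lambda>x. c x - ck)"
      have dec: "decrement_counters ks (T,c) = (T2, c2)"
        by (simp add: decrement_counters_def Let_def T2_def c2_def ck_def)
      define st' where "st' = (if ck \<le> d then (insert a T2, c2(a := d - ck)) else (T2, c2))"
      have st: "rbmc_update k ks (T,c) (a,d) = st'"
        using False aT dec unfolding st'_def by (simp add: rbmc_update_def Let_def ck_def)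
      define \<delta> where "\<delta> x = (if x \<in> T then min (c x) ck else if x = a then min d ck else 0)" for x
      have g: "gap (s @ [(a,d)]) st' x = gap s (T,c) x + \<delta> x" for x
        using aT unfolding st'_def \<delta>_def gap_def T2_def c2_def
        by (auto simp: freq_snoc rbmc_estimate_def)
      have \<delta>0: "0 \<le> \<delta> x" for x using cnn ck0 dpos unfolding \<delta>_def by auto
      have \<delta>ck: "\<delta> x \<le> ck" for x using ck0 unfolding \<delta>_def by auto
      have T2T: "T2 \<subset> T"
      proof -
        obtain y where "y \<in> T" "c y = ck" using kp by auto
        hence "y \<notin> T2" "y \<in> T" unfolding T2_def by auto
        thus ?thesis unfolding T2_def by auto
      qed
      have cT2: "card T2 < k" using psubset_card_mono[OF fin T2T] ck by simp
      have fin2: "finite T2" using T2T fin by (meson finite_subset psubset_imp_subset)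
      have cst: "card (fst st') \<le> k" unfolding st'_def using cT2 fin2
        by (auto simp: card_insert_if)
      have sub: "fst st' \<subseteq> {1..m}" unfolding st'_def using T2T TU am by auto
      have nn: "\<forall>x\<in>fst st'. 0 \<le> snd st' x" unfolding st'_def T2_def c2_def by auto
      have fst': "finite (fst st')" unfolding st'_def using fin2 by auto
      have sumd: "real ks * ck \<le> (\<Sum>x\<in>{1..m}. \<delta> x)"
      proof -
        have "real ks * ck \<le> real (card {x\<in>T. ck \<le> c x}) * ck"
          using kp ck0 by (simp add: mult_right_mono)
        also have "\<dots> = (\<Sum>x\<in>{x\<in>T. ck \<le> c x}. \<delta> x)"
          unfolding \<delta>_def by simp
        also have "\<dots> \<le> (\<Sum>x\<in>T. \<delta> x)"
          by (rule sum_mono2[OF fin]) (auto simp: \<delta>0)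
        also have "\<dots> \<le> (\<Sum>x\<in>{1..m}. \<delta> x)"
          by (rule sum_mono2) (use TU \<delta>0 in auto)
        finally show ?thesis .
      qed
      have "(\<Sum>x\<in>{1..m}. gap (s @ [(a,d)]) st' x) = (\<Sum>x\<in>{1..m}. gap s (T,c) x) + (\<Sum>x\<in>{1..m}. \<delta> x)"
        by (simp add: g sum.distrib)
      hence sum': "real ks * (D + ck) \<le> (\<Sum>x\<in>{1..m}. gap (s @ [(a,d)]) st' x)"
        using sD sumd by (simp add: distrib_left)
      have gb: "\<forall>x. 0 \<le> gap (s @ [(a,d)]) st' x \<and> gap (s @ [(a,d)]) st' x \<le> D + ck"
        using gD \<delta>0 \<delta>ck g by (smt (verit))
      show ?thesis unfolding st rinv_def using fst' cst sub nn sum' gb D0 ck0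
        by (metis add_nonneg_nonneg)
    qed
  qed
qed


lemma run_inv:
  assumes ks1: "1 \<le> ks" and ksk: "ks \<le> k" and v: "\<forall>u \<in> set s. fst u \<in> {1..m} \<and> snd u > 0"
  shows "rinv k ks m s (rbmc_run k ks s)"
  using v
proof (induction s rule: rev_induct)
  case Nil
  show ?case unfolding rinv_def rbmc_run_def rbmc_init_def
    by (auto simp: gap_def freq_def rbmc_estimate_def)
next
  case (snoc u s)
  obtain a d where u: "u = (a,d)" by force
  have ih: "rinv k ks m s (rbmc_run k ks s)" using snoc by simp
  obtain T c where tc: "rbmc_run k ks s = (T,c)" by force
  have "rbmc_run k ks (s @ [u]) = rbmc_update k ks (T,c) (a,d)"
    using tc u by (simp add: rbmc_run_def)
  moreover have "a \<in> {1..m}" "d > 0" using snoc.prems u by auto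
  ultimately show ?case using step[of k ks m s T c a d] ih tc ks1 ksk u by simp
qed

lemma sort_rel: "sorted_list_of_multiset (image_mset f (mset xs)) = map f (sort_key f xs)"
proof -
  have "image_mset f (mset xs) = mset (map f xs)" by simp
  hence "sorted_list_of_multiset (image_mset f (mset xs)) = sort (map f xs)"
    by (metis sorted_list_of_multiset_mset)
  also have "\<dots> = map f (sort_key f xs)"
    by (rule properties_for_sort) (simp_all add: mset_map)
  finally show ?thesis .
qed

lemma split_bound:
  fixes g :: "nat \<Rightarrow> real"
  assumes g0: "\<And>x. 0 \<le> g x" and gf: "\<And>x. g x \<le> freq s x" and gD: "\<And>x. g x \<le> D"
  shows "(\<Sum>x\<in>{1..m}. g x) \<le> real j * D + Nres m s j"
proof -
  define U where "U = {1..m::nat}"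
  define f where "f = freq s"
  define xs where "xs = rev (sort_key f (sorted_list_of_set U))"
  have dxs: "distinct xs" unfolding xs_def by simp
  have sxs: "set xs = U" unfolding xs_def U_def by simp
  have Nr: "Nres m s j = sum_list (map f (drop j xs))"
  proof -
    have "mset_set U = mset (sorted_list_of_set U)"
      by (metis mset_sorted_list_of_multiset sorted_list_of_mset_set)
    hence "Nres m s j = sum_list (drop j (rev (map f (sort_key f (sorted_list_of_set U)))))"
      unfolding Nres_def U_def[symmetric] f_def[symmetric] by (metis sort_rel)
    thus ?thesis unfolding xs_def by (simp add: rev_map drop_map)
  qed
  define J where "J = set (take j xs)"
  have dj: "distinct (drop j xs)" "distinct (take j xs)" using dxs by auto
  have disj: "J \<inter> set (drop j xs) = {}" unfolding J_def
    using set_take_disj_set_drop_if_distinct[OF dxs, of j j] by simp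
  have un: "U = J \<union> set (drop j xs)" unfolding J_def using sxs
    by (metis append_take_drop_id set_append)
  have cJ: "card J \<le> j" unfolding J_def
    by (metis card_length length_take min.bounded_iff nle_le)
  have "(\<Sum>x\<in>U. g x) = (\<Sum>x\<in>J. g x) + (\<Sum>x\<in>set (drop j xs). g x)"
    unfolding un by (rule sum.union_disjoint) (use disj in \<open>auto simp: J_def\<close>)
  also have "(\<Sum>x\<in>J. g x) \<le> (\<Sum>x\<in>J. D)" by (rule sum_mono) (rule gD)
  also have "(\<Sum>x\<in>J. D) = real (card J) * D" by simp
  also have "\<dots> \<le> real j * D"
  proof -
    have "0 \<le> D" using g0 gD order_trans by blast
    thus ?thesis using cJ by (simp add: mult_right_mono)
  qed
  also have "(\<Sum>x\<in>set (drop j xs). g x) \<le> (\<Sum>x\<in>set (drop j xs). f x)"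
    by (rule sum_mono) (simp add: gf f_def)
  also have "\<dots> = Nres m s j" unfolding Nr using dj(1) by (simp add: sum_list_distinct_conv_sum_set)
  finally show ?thesis unfolding U_def by simp
qed

theorem theorem5:
  fixes k ks m j i :: nat and s :: "(nat \<times> real) list"
  assumes "1 \<le> k" and "1 \<le> ks" and "ks \<le> k"
    and "\<forall>u \<in> set s. fst u \<in> {1..m} \<and> snd u > 0"
    and "j < ks" and "i \<in> {1..m}"
  shows "0 \<le> freq s i - rbmc_estimate (rbmc_run k ks s) i
       \<and> freq s i - rbmc_estimate (rbmc_run k ks s) i \<le> Nres m s j / real (ks - j)"
proof -
  define st where "st = rbmc_run k ks s"
  have inv: "rinv k ks m s st" unfolding st_def using run_inv assms by blast
  then obtain D where D0: "D \<ge> 0" and gD: "\<forall>x. 0 \<le> gap s st x \<and> gap s st x \<le> D"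
    and sD: "real ks * D \<le> (\<Sum>x\<in>{1..m}. gap s st x)"
    unfolding rinv_def by auto
  have e0: "0 \<le> rbmc_estimate st x" for x
    using inv unfolding rinv_def rbmc_estimate_def by auto
  have "(\<Sum>x\<in>{1..m}. gap s st x) \<le> real j * D + Nres m s j"
    by (rule split_bound) (use gD e0 in \<open>auto simp: gap_def\<close>)
  hence "real ks * D \<le> real j * D + Nres m s j" using sD by simp
  hence "real (ks - j) * D \<le> Nres m s j" using assms(5) by (simp add: of_nat_diff algebra_simps)
  hence "D \<le> Nres m s j / real (ks - j)" using assms(5) by (simp add: field_simps)
  thus ?thesis using gD unfolding st_def gap_def by (meson order_trans)
qed

end
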